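(* Let $d\ge 3$ and let $\mathcal M$ be a model of $\mathrm{PQM}_d$ with domain $\mathbb M$. Then there exists a function $\kappa:\mathbb M\to\mathbb H_d$ such that for all $m\in\mathbb M$ and all $p\in\mathbb H_d$, $$p\in F^{\mathcal M}(m)\iff \kappa(m)\le p,$$ equivalently $[m:p]^{\mathcal M}\iff[\kappa(m):p]^{\mathcal H_d}$. (That is, each $F^{\mathcal M}(m)$ has a least element $\kappa(m)$ and is the principal up-set it generates.)
   Context: Notation. For $d\ge 1$, $\mathbb H_d$ is the set of complex linear subspaces of $\mathbb C^d$, ordered by inclusion $\le$, with $\top=\mathbb C^d$, $\bot=\{0\}$, $p^\bot$ the orthogonal complement, $p\wedge q=p\cap q$ and $p\vee q=p+q$. $\mathbb U_d$ is the set of unitary operators on $\mathbb C^d$, and for $U\in\mathbb U_d$, $p\in\mathbb H_d$, $U(p)=\{Uv: v\in p\}$. The Sasaki projection is $p\,\&\,q := q\cap(q^\bot+p)$. Subspaces $p,q$ are compatible iff $p=(p\wedge q)\vee(p\wedge q^\bot)$. Language $\mathcal L_d$: a first-order language without equality and without constants, having a unary function symbol $u_U$ for each $U\in\mathbb U_d$, a unary function symbol $\pi_q$ for each $q\in\mathbb H_d$, and a unary relation symbol $[\,\cdot:p]$ for each $p\in\mathbb H_d$. Theory $\mathrm{PQM}_d$ (over $\mathcal L_d$) has the following axioms, for all $p,q\in\mathbb H_d$ and $U\in\mathbb U_d$: ($\neg\bot$) $\exists x\,\neg[x:\bot]$; ($\top$) $\forall x\,[x:\top]$; ($\le$) if $p\le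 q$: $\forall x\,([x:p]\to[x:q])$; ($\wedge$) if $p,q$ are compatible: $\forall x\,([x:p]\wedge[x:q]\to[x:p\wedge q])$; ($\pi_i$) $\forall x\,([x:p]\to[\pi_q(x):p\,\&\,q])$; ($\pi_c$) if $p\le q$: $\forall x\,([\pi_p(\pi_q(x)):\bot]\to[\pi_p(x):\bot])$; ($\pi_\bot$) $\forall x\,([\pi_q(x):\bot]\to[x:q^\bot])$; ($u_i$) $\forall x\,([x:p]\to[u_U(x):U(p)])$; ($u_e$) $\forall x\,([u_U(x):p]\to[x:U^{-1}(p)])$. Hilbert model $\mathcal H_d$: the $\mathcal L_d$-structure with domain $\mathbb H_d$, $u_U^{\mathcal H_d}(x)=U(x)$, $\pi_q^{\mathcal H_d}(x)=x\,\&\,q$, and $[x:p]^{\mathcal H_d}$ holds iff $x\le p$. Filter: for an $\mathcal L_d$-structure $\mathcal M$ with domain $\mathbb M$ and $m\in\mathbb M$, $F^{\mathcal M}(m)=\{p\in\mathbb H_d : [m:p]^{\mathcal M}\}$, where $[\,\cdot:p]^{\mathcal M}$ is the interpretation of the relation symbol $[\,\cdot:p]$ in $\mathcal M$. *)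

theory Defs
  imports "HOL-Analysis.Analysis"
begin

text \<open>The Hilbert space C^d is modelled as complex ^ 'n with d = CARD('n).\<close>

definition csubspace :: "(complex ^ 'n) set \<Rightarrow> bool" where
  "csubspace S \<longleftrightarrow> 0 \<in> S \<and> (\<forall>x\<in>S. \<forall>y\<in>S. x + y \<in> S) \<and> (\<forall>c. \<forall>x\<in>S. c *s x \<in> S)"

definition cinner :: "complex ^ 'n \<Rightarrow> complex ^ 'n \<Rightarrow> complex" where
  "cinner v w = (\<Sum>i\<in>UNIV. cnj (v $ i) * w $ i)"

definition orth :: "(complex ^ 'n) set \<Rightarrow> (complex ^ 'n) set" where
  "orth p = {v. \<forall>w\<in>p. cinner w v = 0}"

definition ssum :: "(complex ^ 'n) set \<Rightarrow> (complex ^ 'n) set \<Rightarrow> (complex ^ 'n) set" where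
  "ssum p q = {x + y | x y. x \<in> p \<and> y \<in> q}"

definition bot_sub :: "(complex ^ 'n) set" where
  "bot_sub = {0}"

definition sasaki :: "(complex ^ 'n) set \<Rightarrow> (complex ^ 'n) set \<Rightarrow> (complex ^ 'n) set" where
  "sasaki p q = q \<inter> ssum (orth q) p"

definition compatible :: "(complex ^ 'n) set \<Rightarrow> (complex ^ 'n) set \<Rightarrow> bool" where
  "compatible p q \<longleftrightarrow> p = ssum (p \<inter> q) (p \<inter> orth q)"

definition cadjoint :: "complex ^ 'n ^ 'n \<Rightarrow> complex ^ 'n ^ 'n" where
  "cadjoint U = (\<chi> i j. cnj (U $ j $ i))"

definition unitary :: "complex ^ 'n ^ 'n \<Rightarrow> bool" where
  "unitary U \<longleftrightarrow> cadjoint U ** U = mat 1 \<and> U ** cadjoint U = mat 1"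

definition uimage :: "complex ^ 'n ^ 'n \<Rightarrow> (complex ^ 'n) set \<Rightarrow> (complex ^ 'n) set" where
  "uimage U p = (\<lambda>v. U *v v) ` p"

definition upreimage :: "complex ^ 'n ^ 'n \<Rightarrow> (complex ^ 'n) set \<Rightarrow> (complex ^ 'n) set" where
  "upreimage U p = {v. U *v v \<in> p}"

text \<open>An L_d-structure with domain M: interpretations u (of the u_U), proj (of the pi_q)
  and R (with R p x meaning [x:p]).  Being a model of PQM_d:\<close>
definition PQM_model ::
  "'m set \<Rightarrow> (complex ^ 'n ^ 'n \<Rightarrow> 'm \<Rightarrow> 'm) \<Rightarrow> ((complex ^ 'n) set \<Rightarrow> 'm \<Rightarrow> 'm)
     \<Rightarrow> ((complex ^ 'n) set \<Rightarrow> 'm \<Rightarrow> bool) \<Rightarrow> bool" where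
  "PQM_model M u proj R \<longleftrightarrow>
     (\<forall>U. unitary U \<longrightarrow> (\<forall>x\<in>M. u U x \<in> M)) \<and>
     (\<forall>q. csubspace q \<longrightarrow> (\<forall>x\<in>M. proj q x \<in> M)) \<and>
     (\<exists>x\<in>M. \<not> R bot_sub x) \<and>
     (\<forall>x\<in>M. R UNIV x) \<and>
     (\<forall>p q. csubspace p \<longrightarrow> csubspace q \<longrightarrow> p \<subseteq> q \<longrightarrow> (\<forall>x\<in>M. R p x \<longrightarrow> R q x)) \<and>
     (\<forall>p q. csubspace p \<longrightarrow> csubspace q \<longrightarrow> compatible p q \<longrightarrow>
        (\<forall>x\<in>M. R p x \<and> R q x \<longrightarrow> R (p \<inter> q) x)) \<and>
     (\<forall>p q. csubspace p \<longrightarrow> csubspace q \<longrightarrow> (\<forall>x\<in>M. R p x \<longrightarrow> R (sasaki p q) (proj q x))) \<and>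
     (\<forall>p q. csubspace p \<longrightarrow> csubspace q \<longrightarrow> p \<subseteq> q \<longrightarrow>
        (\<forall>x\<in>M. R bot_sub (proj p (proj q x)) \<longrightarrow> R bot_sub (proj p x))) \<and>
     (\<forall>q. csubspace q \<longrightarrow> (\<forall>x\<in>M. R bot_sub (proj q x) \<longrightarrow> R (orth q) x)) \<and>
     (\<forall>p U. csubspace p \<longrightarrow> unitary U \<longrightarrow> (\<forall>x\<in>M. R p x \<longrightarrow> R (uimage U p) (u U x))) \<and>
     (\<forall>p U. csubspace p \<longrightarrow> unitary U \<longrightarrow> (\<forall>x\<in>M. R p (u U x) \<longrightarrow> R (upreimage U p) x))"

end

theory Submission
  imports Defs
begin

lemma cinner_add_left: "cinner (x + y) z = cinner x z + cinner y z"
  by (simp add: cinner_def sum.distrib[symmetric] distrib_right)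
lemma cinner_add_right: "cinner z (x + y) = cinner z x + cinner z y"
  by (simp add: cinner_def sum.distrib[symmetric] distrib_left)
lemma cinner_diff_left: "cinner (x - y) z = cinner x z - cinner y z"
  by (simp add: cinner_def sum_subtractf[symmetric] left_diff_distrib)
lemma cinner_diff_right: "cinner z (x - y) = cinner z x - cinner z y"
  by (simp add: cinner_def sum_subtractf[symmetric] right_diff_distrib)
lemma cinner_scale_left: "cinner (c *s x) z = cnj c * cinner x z"
  by (simp add: cinner_def sum_distrib_left mult.assoc)
lemma cinner_scale_right: "cinner z (c *s x) = c * cinner z x"
  by (simp add: cinner_def sum_distrib_left mult.left_commute)
lemma cinner_zero_left[simp]: "cinner 0 z = 0"
  by (simp add: cinner_def)
lemma cinner_zero_right[simp]: "cinner z 0 = 0"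
  by (simp add: cinner_def)
lemma cinner_neg_left: "cinner (- x) z = - cinner x z"
  by (simp add: cinner_def sum_negf)
lemma cinner_neg_right: "cinner z (- x) = - cinner z x"
  by (simp add: cinner_def sum_negf)
lemma cinner_cnj: "cnj (cinner x y) = cinner y x"
  by (simp add: cinner_def mult.commute)

lemmas cinner_simps = cinner_add_left cinner_add_right cinner_diff_left cinner_diff_right
  cinner_scale_left cinner_scale_right cinner_neg_left cinner_neg_right

lemma cinner_self_real: "cinner x x = complex_of_real ((norm x)^2)"
proof -
  have "cinner x x = (\<Sum>i\<in>UNIV. complex_of_real ((cmod (x$i))^2))"
    unfolding cinner_def by (rule sum.cong) (simp, metis complex_norm_square mult.commute)
  also have "\<dots> = complex_of_real ((norm x)^2)"
  proof -
    have "(norm x)^2 = (\<Sum>i\<in>UNIV. (cmod (x$i))^2)"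
      by (simp add: norm_vec_def L2_set_def sum_nonneg)
    then show ?thesis by (simp only: of_real_sum)
  qed
  finally show ?thesis .
qed

lemma cinner_self_eq_0: "cinner x x = 0 \<longleftrightarrow> x = 0"
  by (simp add: cinner_self_real)

lemma inner_Re_cinner: "inner x y = Re (cinner x y)"
  by (simp add: inner_vec_def cinner_def inner_complex_def)

lemma scaleR_cvec: "r *\<^sub>R (x::complex^'n) = complex_of_real r *s x"
  by (vector scaleR_conv_of_real)

lemma cinner_ii_left: "cinner (\<i> *s x) y = - \<i> * cinner x y"
  by (simp add: cinner_scale_left)

lemma csubspace_subspace: "csubspace S \<Longrightarrow> subspace S"
  unfolding csubspace_def subspace_def by (simp add: scaleR_cvec)

lemma orth_real:
  assumes "csubspace S"
  shows "v \<in> orth S \<longleftrightarrow> (\<forall>w\<in>S. inner w v = 0)"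
proof
  assume "v \<in> orth S" then show "\<forall>w\<in>S. inner w v = 0"
    by (simp add: orth_def inner_Re_cinner)
next
  assume H: "\<forall>w\<in>S. inner w v = 0"
  show "v \<in> orth S" unfolding orth_def
  proof (clarify)
    fix w assume w: "w \<in> S"
    then have "\<i> *s w \<in> S" using assms by (simp add: csubspace_def)
    then have "Re (cinner (\<i> *s w) v) = 0" using H by (simp add: inner_Re_cinner)
    then have "Im (cinner w v) = 0" by (simp add: cinner_ii_left)
    moreover have "Re (cinner w v) = 0" using H w by (simp add: inner_Re_cinner)
    ultimately show "cinner w v = 0" by (simp add: complex_eq_iff)
  qed
qed

lemma csubspace_orth: "csubspace (orth S)"
  unfolding csubspace_def orth_def by (simp add: cinner_simps)

lemma orth_antimono: "S \<subseteq> T \<Longrightarrow> orth T \<subseteq> orth S"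
  unfolding orth_def by auto

lemma orth_orth_sup: "S \<subseteq> orth (orth S)"
  unfolding orth_def by (auto, metis cinner_cnj complex_cnj_zero)

lemma orth_orth:
  assumes S: "csubspace S"
  shows "orth (orth S) = S"
proof
  show "orth (orth S) \<subseteq> S"
  proof
    fix x assume x: "x \<in> orth (orth S)"
    have sp: "span S = S" using csubspace_subspace[OF S] by (simp add: span_eq_iff)
    obtain y z where y: "y \<in> span S" and z: "\<And>w. w \<in> span S \<Longrightarrow> orthogonal z w" and xyz: "x = y + z"
      using orthogonal_subspace_decomp_exists by blast
    have "z \<in> orth S" using z sp orth_real[OF S] by (simp add: orthogonal_def inner_commute)
    then have "cinner z x = 0" using x by (simp add: orth_def)
    then have "inner z x = 0" by (simp add: inner_Re_cinner)
    moreover have "inner z y = 0" using z y by (simp add: orthogonal_def)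
    ultimately have "inner z z = 0" using xyz by (simp add: inner_add_right)
    then have "z = 0" by simp
    then show "x \<in> S" using xyz y sp by simp
  qed
qed (rule orth_orth_sup)

definition cline :: "complex ^ 'n \<Rightarrow> (complex ^ 'n) set" where
  "cline x = range (\<lambda>c. c *s x)"

lemma csubspace_cline: "csubspace (cline x)"
  unfolding csubspace_def cline_def
proof (intro conjI ballI allI)
  show "0 \<in> range (\<lambda>c. c *s x)" by (rule range_eqI[where x=0]) simp
next
  fix a b assume "a \<in> range (\<lambda>c. c *s x)" "b \<in> range (\<lambda>c. c *s x)"
  then obtain c d where "a = c *s x" "b = d *s x" by auto
  then have "a + b = (c + d) *s x" by (simp add: vector_sadd_rdistrib)
  then show "a + b \<in> range (\<lambda>c. c *s x)" by (metis rangeI)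
next
  fix c a assume "a \<in> range (\<lambda>c. c *s x)"
  then obtain d where "a = d *s x" by auto
  then have "c *s a = (c * d) *s x" by simp
  then show "c *s a \<in> range (\<lambda>c. c *s x)" by (metis rangeI)
qed

lemma cline_self: "x \<in> cline x"
  unfolding cline_def by (rule range_eqI[where x=1]) simp

lemma orth_cline: "orth (cline x) = orth {x}"
  unfolding orth_def cline_def by (auto simp: cinner_scale_left)

lemma csubspace_inter: "csubspace p \<Longrightarrow> csubspace q \<Longrightarrow> csubspace (p \<inter> q)"
  unfolding csubspace_def by auto

lemma csubspace_ssum: 
  assumes p: "csubspace p" and q: "csubspace q" shows "csubspace (ssum p q)"
proof -
  have "0 \<in> ssum p q" using p q unfolding csubspace_def ssum_def by force
  moreover have "x + y \<in> ssum p q" if xs: "x \<in> ssum p q" and ys: "y \<in> ssum p q" for x y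
  proof -
    obtain a b where "x = a + b" "a \<in> p" "b \<in> q" using xs by (auto simp: ssum_def)
    moreover obtain a' b' where "y = a' + b'" "a' \<in> p" "b' \<in> q" using ys by (auto simp: ssum_def)
    ultimately have "x + y = (a + a') + (b + b')" "a + a' \<in> p" "b + b' \<in> q"
      using p q by (auto simp: csubspace_def algebra_simps)
    then show ?thesis by (auto simp: ssum_def)
  qed
  moreover have "c *s x \<in> ssum p q" if xs: "x \<in> ssum p q" for x c
  proof -
    obtain a b where "x = a + b" "a \<in> p" "b \<in> q" using xs by (auto simp: ssum_def)
    then have "c *s x = c *s a + c *s b" "c *s a \<in> p" "c *s b \<in> q"
      using p q by (auto simp: csubspace_def vector_add_ldistrib)
    then show ?thesis by (auto simp: ssum_def)
  qed
  ultimately show ?thesis unfolding csubspace_def by blast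
qed

lemma csubspace_sasaki: "csubspace p \<Longrightarrow> csubspace q \<Longrightarrow> csubspace (sasaki p q)"
  unfolding sasaki_def by (intro csubspace_inter csubspace_ssum csubspace_orth)

lemma compat_orth:
  assumes "csubspace p" "csubspace q" "p \<subseteq> orth q"
  shows "compatible p q"
  unfolding compatible_def ssum_def
proof (rule set_eqI, rule iffI)
  fix x assume "x \<in> p"
  then show "x \<in> {x + y |x y. x \<in> p \<inter> q \<and> y \<in> p \<inter> orth q}"
  proof -
    have "0 \<in> p \<inter> q" using assms by (auto simp: csubspace_def)
    moreover have "x \<in> p \<inter> orth q" using assms \<open>x \<in> p\<close> by auto
    ultimately show ?thesis by force
  qed
next
  fix x assume "x \<in> {x + y |x y. x \<in> p \<inter> q \<and> y \<in> p \<inter> orth q}"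
  then show "x \<in> p" using assms by (auto simp: csubspace_def)
qed

lemma cline_orth_inter:
  assumes "cinner x y = 0"
  shows "cline x \<inter> cline y = bot_sub"
proof -
  have "v = 0" if vx: "v \<in> cline x" and vy: "v \<in> cline y" for v
  proof -
    obtain c where c: "v = c *s x" using vx by (auto simp: cline_def)
    obtain d where d: "v = d *s y" using vy by (auto simp: cline_def)
    have "cinner v v = cinner (c *s x) (d *s y)" using c d by simp
    then have "cinner v v = cnj c * d * cinner x y" by (simp add: cinner_scale_left cinner_scale_right)
    then show ?thesis using assms by (simp add: cinner_self_eq_0)
  qed
  moreover have "0 \<in> cline x" "0 \<in> cline y" using csubspace_cline by (auto simp: csubspace_def)
  ultimately show ?thesis unfolding bot_sub_def by blast
qed

lemma cline_sub_orth:
  assumes "cinner x y = 0"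
  shows "cline x \<subseteq> orth (cline y)"
  using assms unfolding orth_def cline_def
  by (auto simp: cinner_scale_left cinner_scale_right) (metis cinner_cnj complex_cnj_zero)


locale pqm =
  fixes M :: "'m set"
    and u :: "complex ^ 'n ^ 'n \<Rightarrow> 'm \<Rightarrow> 'm"
    and proj :: "(complex ^ 'n) set \<Rightarrow> 'm \<Rightarrow> 'm"
    and R :: "(complex ^ 'n) set \<Rightarrow> 'm \<Rightarrow> bool"
  assumes model: "PQM_model M u proj R"
begin

lemma ax: "(\<forall>q. csubspace q \<longrightarrow> (\<forall>x\<in>M. proj q x \<in> M))"
  "(\<forall>x\<in>M. R UNIV x)"
  "(\<forall>p q. csubspace p \<longrightarrow> csubspace q \<longrightarrow> p \<subseteq> q \<longrightarrow> (\<forall>x\<in>M. R p x \<longrightarrow> R q x))"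
  "(\<forall>p q. csubspace p \<longrightarrow> csubspace q \<longrightarrow> compatible p q \<longrightarrow>
        (\<forall>x\<in>M. R p x \<and> R q x \<longrightarrow> R (p \<inter> q) x))"
  "(\<forall>p q. csubspace p \<longrightarrow> csubspace q \<longrightarrow> (\<forall>x\<in>M. R p x \<longrightarrow> R (sasaki p q) (proj q x)))"
  "(\<forall>q. csubspace q \<longrightarrow> (\<forall>x\<in>M. R bot_sub (proj q x) \<longrightarrow> R (orth q) x))"
  using model unfolding PQM_model_def by - (elim conjE, assumption)+

lemma projM: "csubspace q \<Longrightarrow> x \<in> M \<Longrightarrow> proj q x \<in> M"
  using ax(1) by blast
lemma Rtop: "x \<in> M \<Longrightarrow> R UNIV x"
  using ax(2) by blast
lemma Rup: "csubspace p \<Longrightarrow> csubspace q \<Longrightarrow> p \<subseteq> q \<Longrightarrow> x \<in> M \<Longrightarrow> R p x \<Longrightarrow> R q x"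
  using ax(3) by blast
lemma Rmeet: "csubspace p \<Longrightarrow> csubspace q \<Longrightarrow> compatible p q \<Longrightarrow> x \<in> M \<Longrightarrow> R p x \<Longrightarrow> R q x \<Longrightarrow> R (p \<inter> q) x"
  using ax(4) by blast
lemma Rsas: "csubspace p \<Longrightarrow> csubspace q \<Longrightarrow> x \<in> M \<Longrightarrow> R p x \<Longrightarrow> R (sasaki p q) (proj q x)"
  using ax(5) by blast
lemma Rpbot: "csubspace q \<Longrightarrow> x \<in> M \<Longrightarrow> R bot_sub (proj q x) \<Longrightarrow> R (orth q) x"
  using ax(6) by blast

lemma L0:
  assumes z: "z \<in> M" and Rx: "R (cline x) z" and Ry: "R (cline y) z" and o: "cinner x y = 0"
  shows "R bot_sub z"
proof -
  have "compatible (cline x) (cline y)"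
    using compat_orth[OF csubspace_cline csubspace_cline cline_sub_orth[OF o]] .
  then have "R (cline x \<inter> cline y) z"
    using Rmeet[OF csubspace_cline csubspace_cline _ z Rx Ry] by blast
  then show ?thesis using cline_orth_inter[OF o] by simp
qed

end

lemma sasaki_hyper_sub:
  assumes w: "w \<noteq> 0"
  shows "sasaki (cline x) (orth {w}) \<subseteq> cline (x - (cinner w x / cinner w w) *s w)"
proof
  fix y assume y: "y \<in> sasaki (cline x) (orth {w})"
  have ow: "orth (orth {w}) = cline w"
    using orth_orth[OF csubspace_cline[of w]] by (simp add: orth_cline)
  obtain t s where yts: "y = t + s" and t: "t \<in> cline w" and s: "s \<in> cline x" and yo: "y \<in> orth {w}"
    using y ow unfolding sasaki_def ssum_def by auto
  obtain d where d: "t = d *s w" using t by (auto simp: cline_def)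
  obtain c where c: "s = c *s x" using s by (auto simp: cline_def)
  have a: "cinner w w \<noteq> 0" using w by (simp add: cinner_self_eq_0)
  have "cinner w y = 0" using yo by (simp add: orth_def)
  then have "d * cinner w w + c * cinner w x = 0"
    using yts d c by (simp add: cinner_simps)
  then have "d * cinner w w = - (c * cinner w x)" by (simp add: eq_neg_iff_add_eq_0)
  then have dd: "d = - (c * cinner w x / cinner w w)" using a by (simp add: field_simps)
  have "y = c *s (x - (cinner w x / cinner w w) *s w)"
    unfolding yts d c dd vec_eq_iff by (simp add: algebra_simps)
  then show "y \<in> cline (x - (cinner w x / cinner w w) *s w)" by (simp add: cline_def)
qed

lemma cinner_proj_hyper:
  assumes w: "w \<noteq> 0"
  shows "cinner (x - (cinner w x / cinner w w) *s w) (y - (cinner w y / cinner w w) *s w)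
     = (cinner x y * cinner w w - cinner x w * cinner w y) / cinner w w"
proof -
  obtain a where a: "cinner w w = complex_of_real a" and a0: "a \<noteq> 0"
    using w cinner_self_real[of w] cinner_self_eq_0[of w] by fastforce
  have cx: "cnj (cinner w x) = cinner x w" by (rule cinner_cnj)
  have ca: "cnj (cinner w w) = cinner w w" using a by simp
  have "cinner (x - (cinner w x / cinner w w) *s w) (y - (cinner w y / cinner w w) *s w)
     = cinner x y - (cinner w y / cinner w w) * cinner x w - cnj (cinner w x / cinner w w) * cinner w y
       + cnj (cinner w x / cinner w w) * (cinner w y / cinner w w) * cinner w w"
    by (simp add: cinner_simps algebra_simps)
  also have "\<dots> = cinner x y - (cinner w y / cinner w w) * cinner x w - (cinner x w / cinner w w) * cinner w y
       + (cinner x w / cinner w w) * (cinner w y / cinner w w) * cinner w w"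
    by (simp add: cx ca)
  also have "\<dots> = (cinner x y * cinner w w - cinner x w * cinner w y) / cinner w w"
    using a a0 by (simp add: field_simps)
  finally show ?thesis .
qed

context pqm begin

lemma L1:
  assumes z: "z \<in> M" and w: "w \<noteq> 0" and Rx: "R (cline x) z" and Ry: "R (cline y) z"
    and cond: "cinner x y * cinner w w = cinner x w * cinner w y"
  shows "R (cline w) z"
proof -
  let ?q = "orth {w}"
  have q: "csubspace ?q" by (rule csubspace_orth)
  have z': "proj ?q z \<in> M" using projM[OF q z] .
  have "R (sasaki (cline x) ?q) (proj ?q z)" using Rsas[OF csubspace_cline q z Rx] .
  then have 1: "R (cline (x - (cinner w x / cinner w w) *s w)) (proj ?q z)"
    using Rup[OF csubspace_sasaki[OF csubspace_cline q] csubspace_cline sasaki_hyper_sub[OF w] z'] by blast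
  have "R (sasaki (cline y) ?q) (proj ?q z)" using Rsas[OF csubspace_cline q z Ry] .
  then have 2: "R (cline (y - (cinner w y / cinner w w) *s w)) (proj ?q z)"
    using Rup[OF csubspace_sasaki[OF csubspace_cline q] csubspace_cline sasaki_hyper_sub[OF w] z'] by blast
  have "R bot_sub (proj ?q z)"
    by (rule L0[OF z' 1 2]) (simp add: cinner_proj_hyper[OF w] cond)
  then have "R (orth ?q) z" using Rpbot[OF q z] by blast
  moreover have "orth ?q = cline w"
    using orth_orth[OF csubspace_cline[of w]] by (simp add: orth_cline)
  ultimately show ?thesis by simp
qed

end

definition nsq :: "complex ^ 'n \<Rightarrow> real" where "nsq a = Re (cinner a a)"
definition mval :: "complex ^ 'n \<Rightarrow> complex ^ 'n \<Rightarrow> real" where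
  "mval a b = (cmod (cinner a b))^2 / (nsq a * nsq b - (cmod (cinner a b))^2)"

lemma cinner_self_nsq: "cinner a a = complex_of_real (nsq a)"
  by (simp add: nsq_def cinner_self_real)
lemma nsq_norm: "nsq a = (norm a)^2"
  by (simp add: nsq_def cinner_self_real)
lemma cnj_mult_self: "cnj z * z = complex_of_real ((cmod z)^2)"
  by (metis complex_norm_square mult.commute)
lemma cmod_cinner_sym: "cmod (cinner b a) = cmod (cinner a b)"
  by (metis cinner_cnj complex_mod_cnj)

lemma frame:
  assumes g: "g \<noteq> 0" and ag: "cinner a g = 0" and bg: "cinner b g = 0"
    and np: "(cmod (cinner a b))^2 < nsq a * nsq b"
  obtains u f h \<mu> where "cinner u u = 1" "cinner f f = 1" "cinner h h = 1"
    "cinner u f = 0" "cinner u h = 0" "cinner f h = 0"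
    "cline a \<subseteq> cline u" "cline b \<subseteq> cline (\<mu> *s u + f)" "(cmod \<mu>)^2 = mval a b"
proof -
  have a0: "a \<noteq> 0" using np by (auto simp: nsq_def)
  define na where "na = norm a"
  have na: "na > 0" using a0 by (simp add: na_def)
  define u where "u = complex_of_real (1/na) *s a"
  have uu: "cinner u u = 1"
  proof -
    have "cinner u u = cnj (complex_of_real (1/na)) * (complex_of_real (1/na) * cinner a a)"
      by (simp only: u_def cinner_scale_left cinner_scale_right mult.left_commute)
    also have "\<dots> = 1" using na by (simp add: cinner_self_real na_def power2_eq_square)
    finally show ?thesis .
  qed
  define c where "c = cinner u b"
  have cab: "c = complex_of_real (1/na) * cinner a b" by (simp add: c_def u_def cinner_simps)
  define r where "r = b - c *s u"
  have rr: "cinner r r = cinner b b - complex_of_real ((cmod c)^2)"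
  proof -
    have "cinner r r = cinner b b - c * cinner b u - cnj c * cinner u b + cnj c * c * cinner u u"
      by (simp add: r_def cinner_simps algebra_simps)
    also have "\<dots> = cinner b b - complex_of_real ((cmod c)^2)"
      using uu by (simp add: c_def[symmetric] cinner_cnj[of u b, symmetric] cnj_mult_self algebra_simps)
        (metis complex_norm_square of_real_power)
    finally show ?thesis .
  qed
  have cc: "(cmod c)^2 = (cmod (cinner a b))^2 / na^2"
    using na by (simp add: cab norm_divide power_divide)
  have nab: "nsq a = na^2" by (simp add: na_def nsq_norm)
  have nrr: "nsq r = nsq b - (cmod (cinner a b))^2 / na^2"
    using rr cc by (simp add: nsq_def)
  have nrpos: "nsq r > 0"
  proof -
    have "(cmod (cinner a b))^2 / na^2 < nsq b" using np na nab
      by (simp add: divide_less_eq mult.commute)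
    then show ?thesis using nrr by simp
  qed
  define nr where "nr = sqrt (nsq r)"
  have nr: "nr > 0" using nrpos by (simp add: nr_def)
  have nr2: "nr^2 = nsq r" using nrpos by (simp add: nr_def)
  define f where "f = complex_of_real (1/nr) *s r"
  define \<mu> where "\<mu> = c / complex_of_real nr"
  define ng where "ng = norm g"
  have ng: "ng > 0" using g by (simp add: ng_def)
  define h where "h = complex_of_real (1/ng) *s g"
  have ff: "cinner f f = 1"
  proof -
    have "cinner f f = cnj (complex_of_real (1/nr)) * (complex_of_real (1/nr) * cinner r r)"
      by (simp only: f_def cinner_scale_left cinner_scale_right mult.left_commute)
    also have "\<dots> = 1" using nr nr2 nrpos by (simp add: cinner_self_nsq power2_eq_square flip: of_real_mult)
    finally show ?thesis .
  qed
  have hh: "cinner h h = 1"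
  proof -
    have "cinner h h = cnj (complex_of_real (1/ng)) * (complex_of_real (1/ng) * cinner g g)"
      by (simp only: h_def cinner_scale_left cinner_scale_right mult.left_commute)
    also have "\<dots> = 1" using ng by (simp add: cinner_self_real ng_def power2_eq_square)
    finally show ?thesis .
  qed
  have ur: "cinner u r = 0" using uu by (simp add: r_def cinner_simps c_def)
  have uf: "cinner u f = 0" by (simp add: f_def cinner_simps ur)
  have uh: "cinner u h = 0" by (simp add: h_def u_def cinner_simps ag)
  have ug: "cinner u g = 0" by (simp add: u_def cinner_simps ag)
  have fh: "cinner f h = 0" by (simp add: h_def f_def r_def cinner_simps bg ug)
  have la: "cline a \<subseteq> cline u"
  proof
    fix y assume "y \<in> cline a"
    then obtain t where "y = t *s a" by (auto simp: cline_def)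
    moreover have "a = complex_of_real na *s u" using na by (simp add: u_def)
    ultimately have "y = (t * complex_of_real na) *s u" by simp
    then show "y \<in> cline u" by (metis cline_def rangeI)
  qed
  have lb: "cline b \<subseteq> cline (\<mu> *s u + f)"
  proof
    fix y assume "y \<in> cline b"
    then obtain t where "y = t *s b" by (auto simp: cline_def)
    moreover have "b = complex_of_real nr *s (\<mu> *s u + f)"
      using nr by (simp add: \<mu>_def f_def r_def vector_add_ldistrib)
    ultimately have "y = (t * complex_of_real nr) *s (\<mu> *s u + f)" by simp
    then show "y \<in> cline (\<mu> *s u + f)" by (metis cline_def rangeI)
  qed
  have mu: "(cmod \<mu>)^2 = mval a b"
  proof -
    have "(cmod \<mu>)^2 = (cmod c)^2 / nsq r" using nr nr2 by (simp add: \<mu>_def norm_divide power_divide)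
    also have "\<dots> = ((cmod (cinner a b))^2 / na^2) / (nsq b - (cmod (cinner a b))^2 / na^2)"
      using cc nrr by simp
    also have "\<dots> = mval a b" using na unfolding mval_def nab
      by (simp add: field_simps)
    finally show ?thesis .
  qed
  show ?thesis using that[OF uu ff hh uf uh fh la lb mu] .
qed


locale onb =
  fixes u f h :: "complex ^ 'n"
  assumes uu: "cinner u u = 1" and ff: "cinner f f = 1" and hh: "cinner h h = 1"
    and uf: "cinner u f = 0" and uh: "cinner u h = 0" and fh: "cinner f h = 0"
begin
lemma fu: "cinner f u = 0" using uf by (metis cinner_cnj complex_cnj_zero)
lemma hu: "cinner h u = 0" using uh by (metis cinner_cnj complex_cnj_zero)
lemma hf: "cinner h f = 0" using fh by (metis cinner_cnj complex_cnj_zero)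
lemmas onb_simps = uu ff hh uf uh fh fu hu hf

lemma ip_ww: "cinner (\<alpha> *s u + f + \<sigma> *s h) (\<beta> *s u + f + \<tau> *s h) = cnj \<alpha> * \<beta> + 1 + cnj \<sigma> * \<tau>"
  by (simp add: cinner_simps onb_simps)
lemma ip_uw: "cinner u (\<alpha> *s u + f + \<sigma> *s h) = \<alpha>"
  by (simp add: cinner_simps onb_simps)
lemma ip_wb: "cinner (\<alpha> *s u + f + \<sigma> *s h) (\<mu> *s u + f) = cnj \<alpha> * \<mu> + 1"
  by (simp add: cinner_simps onb_simps)
lemma ip_ub: "cinner u (\<mu> *s u + f) = \<mu>"
  by (simp add: cinner_simps onb_simps)
lemma ip_wg: "cinner (\<alpha> *s u + f + \<sigma> *s h) (u - \<beta> *s f) = cnj \<alpha> - \<beta>"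
  by (simp add: cinner_simps onb_simps)
lemma ip_ug: "cinner u (u - \<beta> *s f) = 1"
  by (simp add: cinner_simps onb_simps)

lemma small_vec:
  fixes \<mu> :: complex and H \<gamma> :: real
  assumes m: "cnj \<mu> * \<mu> = complex_of_real m"
    and g: "\<gamma> * \<gamma> = H - 1"
    and w: "w = (\<mu> * complex_of_real H) *s u + f + (complex_of_real \<sigma>) *s h"
    and sg: "\<sigma> * \<sigma> = \<gamma> * \<gamma>"
  shows "cinner u (\<mu> *s u + f) * cinner w w = cinner u w * cinner w (\<mu> *s u + f)"
proof -
  have gc: "complex_of_real \<sigma> * complex_of_real \<sigma> = complex_of_real H - 1"
    using g sg by (metis of_real_1 of_real_diff of_real_mult)
  show ?thesis unfolding w
    apply (simp add: cinner_simps onb_simps)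
    apply (rule disjI2)
    using gc by algebra
qed

end

context pqm begin

lemma core_small:
  assumes z: "z \<in> M" and onb: "onb e f h" and Ru: "R (cline e) z"
    and Rb: "R (cline (\<mu> *s e + f)) z" and sm: "(cmod \<mu>)^2 \<le> 1/8"
  shows "R bot_sub z"
proof (cases "\<mu> = 0")
  case True
  then show ?thesis using L0[OF z Ru] Rb onb.uf[OF onb] by simp
next
  case False
  define m where "m = (cmod \<mu>)^2"
  have m0: "m > 0" using False by (simp add: m_def)
  have m8: "m \<le> 1/8" using sm by (simp add: m_def)
  have mc: "cnj \<mu> * \<mu> = complex_of_real m" by (simp add: m_def cnj_mult_self)
  define s where "s = sqrt (1 - 8*m)"
  have s0: "s \<ge> 0" and s2: "s * s = 1 - 8*m" using m8 by (auto simp: s_def)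
  define H where "H = (1 + s) / (2*m)"
  have Hq: "m * H * H - H + 2 = 0"
  proof -
    have "m * H * H - H + 2 = ((1+s)*(1+s) - 2*(1+s) + 8*m) / (4*m)"
      using m0 by (simp add: H_def field_simps)
    also have "\<dots> = 0" using s2 by (simp add: algebra_simps)
    finally show ?thesis .
  qed
  have H1: "H \<ge> 1"
  proof -
    have "1/(2*m) \<ge> 4" using m0 m8 by (simp add: field_simps)
    moreover have "H \<ge> 1/(2*m)" using s0 m0 by (simp add: H_def divide_right_mono)
    ultimately show ?thesis by simp
  qed
  define \<gamma> where "\<gamma> = sqrt (H - 1)"
  have g2: "\<gamma> * \<gamma> = H - 1" using H1 by (simp add: \<gamma>_def)
  define w1 where "w1 = (\<mu> * complex_of_real H) *s e + f + (complex_of_real \<gamma>) *s h"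
  define w2 where "w2 = (\<mu> * complex_of_real H) *s e + f + (complex_of_real (-\<gamma>)) *s h"
  have c1: "cinner e (\<mu> *s e + f) * cinner w1 w1 = cinner e w1 * cinner w1 (\<mu> *s e + f)"
    by (rule onb.small_vec[OF onb mc g2 w1_def]) simp
  have c2: "cinner e (\<mu> *s e + f) * cinner w2 w2 = cinner e w2 * cinner w2 (\<mu> *s e + f)"
    by (rule onb.small_vec[OF onb mc g2 w2_def]) simp
  have uw1: "cinner e w1 = \<mu> * complex_of_real H"
    using onb by (simp add: w1_def cinner_simps onb.onb_simps)
  have uw2: "cinner e w2 = \<mu> * complex_of_real H"
    using onb by (simp add: w2_def cinner_simps onb.onb_simps)
  have Hp: "H \<noteq> 0" using H1 by simp
  have n1: "w1 \<noteq> 0" using uw1 False Hp by auto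
  have n2: "w2 \<noteq> 0" using uw2 False Hp by auto
  have R1: "R (cline w1) z" by (rule L1[OF z n1 Ru Rb c1])
  have R2: "R (cline w2) z" by (rule L1[OF z n2 Ru Rb c2])
  have gc: "complex_of_real \<gamma> * complex_of_real \<gamma> = complex_of_real H - 1"
    using g2 by (metis of_real_1 of_real_diff of_real_mult)
  have Hqc: "complex_of_real m * complex_of_real H * complex_of_real H - complex_of_real H + 2 = 0"
    using Hq by (metis of_real_0 of_real_add of_real_diff of_real_mult of_real_numeral)
  have "cinner w1 w2 = 0"
    unfolding w1_def w2_def
    apply (simp add: cinner_simps onb.onb_simps[OF onb])
  proof -
    have "\<mu> * complex_of_real H * (cnj \<mu> * complex_of_real H) = (cnj \<mu> * \<mu>) * complex_of_real H * complex_of_real H"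
      by (simp add: algebra_simps)
    also have "\<dots> = complex_of_real H - 2" using mc Hqc by (simp add: algebra_simps eq_diff_eq)
    finally show "\<mu> * complex_of_real H * (cnj \<mu> * complex_of_real H) + 1 = complex_of_real \<gamma> * complex_of_real \<gamma>"
      using gc by simp
  qed
  then show ?thesis by (rule L0[OF z R1 R2])
qed

lemma core:
  "\<forall>z a b g. z \<in> M \<longrightarrow> R (cline a) z \<longrightarrow> R (cline b) z \<longrightarrow> g \<noteq> 0 \<longrightarrow>
     cinner a g = 0 \<longrightarrow> cinner b g = 0 \<longrightarrow> (cmod (cinner a b))^2 < nsq a * nsq b \<longrightarrow>
     mval a b \<le> real k / 12 \<longrightarrow> R bot_sub z"
proof (induction k rule: less_induct)
  fix k
  assume IH: "\<And>k'. k' < k \<Longrightarrow> \<forall>z a b g. z \<in> M \<longrightarrow> R (cline a) z \<longrightarrow> R (cline b) z \<longrightarrow> g \<noteq> 0 \<longrightarrow>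
     cinner a g = 0 \<longrightarrow> cinner b g = 0 \<longrightarrow> (cmod (cinner a b))^2 < nsq a * nsq b \<longrightarrow>
     mval a b \<le> real k' / 12 \<longrightarrow> R bot_sub z"
  show "\<forall>z a b g. z \<in> M \<longrightarrow> R (cline a) z \<longrightarrow> R (cline b) z \<longrightarrow> g \<noteq> 0 \<longrightarrow>
     cinner a g = 0 \<longrightarrow> cinner b g = 0 \<longrightarrow> (cmod (cinner a b))^2 < nsq a * nsq b \<longrightarrow>
     mval a b \<le> real k / 12 \<longrightarrow> R bot_sub z"
  proof (intro allI impI)
    fix z a b g
    assume z: "z \<in> M" and Ra: "R (cline a) z" and Rb: "R (cline b) z" and g: "g \<noteq> 0"
      and ag: "cinner a g = 0" and bg: "cinner b g = 0" and np: "(cmod (cinner a b))^2 < nsq a * nsq b"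
      and mk: "mval a b \<le> real k / 12"
    obtain e f h \<mu> where o1: "cinner e e = 1" "cinner f f = 1" "cinner h h = 1"
      "cinner e f = 0" "cinner e h = 0" "cinner f h = 0"
      and la: "cline a \<subseteq> cline e" and lb: "cline b \<subseteq> cline (\<mu> *s e + f)" and mu: "(cmod \<mu>)^2 = mval a b"
      using frame[OF g ag bg np] by blast
    have onb: "onb e f h" using o1 by (simp add: onb_def)
    have Re: "R (cline e) z" using Rup[OF csubspace_cline csubspace_cline la z Ra] .
    have Rb': "R (cline (\<mu> *s e + f)) z" using Rup[OF csubspace_cline csubspace_cline lb z Rb] .
    define m where "m = (cmod \<mu>)^2"
    have mc: "cnj \<mu> * \<mu> = complex_of_real m" by (simp add: m_def cnj_mult_self)
    show "R bot_sub z"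
    proof (cases "m \<le> 1/8")
      case True
      then show ?thesis using core_small[OF z onb Re Rb'] by (simp add: m_def)
    next
      case False
      have mk': "m \<le> real k / 12" using mk mu by (simp add: m_def)
      obtain k' where kk: "k = Suc k'" using False mk' by (cases k) auto
      define w1 where "w1 = (2*\<mu>) *s e + f + 1 *s h"
      define w2 where "w2 = (2*\<mu>) *s e + f + (-1) *s h"
      define g' where "g' = e - (2 * cnj \<mu>) *s f"
      have c1: "cinner e (\<mu> *s e + f) * cinner w1 w1 = cinner e w1 * cinner w1 (\<mu> *s e + f)"
        unfolding w1_def onb.ip_ww[OF onb] onb.ip_uw[OF onb] onb.ip_wb[OF onb] onb.ip_ub[OF onb]
        by (simp add: algebra_simps)
      have c2: "cinner e (\<mu> *s e + f) * cinner w2 w2 = cinner e w2 * cinner w2 (\<mu> *s e + f)"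
        unfolding w2_def onb.ip_ww[OF onb] onb.ip_uw[OF onb] onb.ip_wb[OF onb] onb.ip_ub[OF onb]
        by (simp add: algebra_simps)
      have m0: "m > 1/8" using False by simp
      have mu0: "\<mu> \<noteq> 0" using m0 by (auto simp: m_def)
      have n1: "w1 \<noteq> 0" using onb.ip_uw[OF onb, of "2*\<mu>" 1] mu0 unfolding w1_def[symmetric] by auto
      have n2: "w2 \<noteq> 0" using onb.ip_uw[OF onb, of "2*\<mu>" "-1"] mu0 unfolding w2_def[symmetric] by auto
      have R1: "R (cline w1) z" by (rule L1[OF z n1 Re Rb' c1])
      have R2: "R (cline w2) z" by (rule L1[OF z n2 Re Rb' c2])
      have g'0: "g' \<noteq> 0" using onb.ip_ug[OF onb, of "2 * cnj \<mu>"] unfolding g'_def[symmetric] by auto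
      have w1g: "cinner w1 g' = 0" unfolding w1_def g'_def onb.ip_wg[OF onb] by simp
      have w2g: "cinner w2 g' = 0" unfolding w2_def g'_def onb.ip_wg[OF onb] by simp
      have i4: "cnj (2*\<mu>) * (2*\<mu>) = complex_of_real (4*m)" using mc by simp
      have i12: "cinner w1 w2 = complex_of_real (4*m)"
        unfolding w1_def w2_def onb.ip_ww[OF onb] using i4 by simp
      have i11: "cinner w1 w1 = complex_of_real (4*m+2)"
        unfolding w1_def onb.ip_ww[OF onb] using i4 by simp
      have i22: "cinner w2 w2 = complex_of_real (4*m+2)"
        unfolding w2_def onb.ip_ww[OF onb] using i4 by simp
      have mpos: "m \<ge> 0" by (simp add: m_def)
      have cm: "(cmod (cinner w1 w2))^2 = 16*m^2" using i12 mpos by (simp add: power2_eq_square)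
      have ns1: "nsq w1 = 4*m+2" using i11 by (simp add: nsq_def)
      have ns2: "nsq w2 = 4*m+2" using i22 by (simp add: nsq_def)
      have np': "(cmod (cinner w1 w2))^2 < nsq w1 * nsq w2"
        unfolding cm ns1 ns2 using mpos by (simp add: power2_eq_square algebra_simps)
      have mv: "mval w1 w2 = 4*m^2/(4*m+1)"
        unfolding mval_def cm ns1 ns2 using mpos by (simp add: power2_eq_square field_simps)
      have "4*m^2/(4*m+1) \<le> m - 1/12"
        using m0 by (simp add: field_simps power2_eq_square)
      then have mv': "mval w1 w2 \<le> real k' / 12" using mv mk' kk by simp
      show ?thesis using IH[of k'] kk z R1 R2 g'0 w1g w2g np' mv' by blast
    qed
  qed
qed

end


lemma exists_orth3:
  fixes a b :: "complex ^ 'n"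
  assumes d: "CARD('n) \<ge> 3"
  obtains g where "g \<noteq> 0" "cinner a g = 0" "cinner b g = 0"
proof -
  let ?S = "{a, \<i> *s a, b, \<i> *s b}"
  have "dim ?S \<le> card ?S" using dim_le_card[of ?S ?S] by (simp add: span_superset)
  also have "card ?S \<le> 4" by (simp add: card_insert_if)
  also have "4 < DIM(complex ^ 'n)" using d by simp
  finally obtain x where x: "x \<noteq> 0" and ox: "\<And>y. y \<in> span ?S \<Longrightarrow> orthogonal x y"
    using orthogonal_to_subspace_exists by blast
  have key: "cinner v x = 0" if "v \<in> ?S" "\<i> *s v \<in> ?S" for v
  proof -
    have "orthogonal x v" using ox span_base[OF that(1)] by blast
    moreover have "orthogonal x (\<i> *s v)" using ox span_base[OF that(2)] by blast
    ultimately have "inner x v = 0" "inner x (\<i> *s v) = 0" by (simp_all add: orthogonal_def)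
    then have "inner v x = 0" "inner (\<i> *s v) x = 0" by (simp_all add: inner_commute)
    then have "Re (cinner v x) = 0" "Re (cinner (\<i> *s v) x) = 0"
      by (simp_all add: inner_Re_cinner)
    then show ?thesis by (simp add: cinner_ii_left complex_eq_iff)
  qed
  have "cinner a x = 0" by (rule key) auto
  moreover have "cinner b x = 0" by (rule key) auto
  ultimately show ?thesis using that x by blast
qed

lemma nonpar:
  assumes a: "a \<noteq> 0" and nb: "\<not> (\<exists>c. b = c *s a)"
  shows "(cmod (cinner a b))^2 < nsq a * nsq b"
proof -
  define A where "A = (norm a)^2"
  have A: "cinner a a = complex_of_real A" "A > 0" using a by (simp_all add: A_def cinner_self_real)
  define r where "r = b - (cinner a b / cinner a a) *s a"
  have r0: "r \<noteq> 0" using nb by (auto simp: r_def)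
  have "cinner r r = cinner b b - (cinner a b / cinner a a) * cinner b a
      - cnj (cinner a b / cinner a a) * cinner a b + cnj (cinner a b / cinner a a) * (cinner a b / cinner a a) * cinner a a"
    by (simp add: r_def cinner_simps algebra_simps)
  also have "\<dots> = cinner b b - cinner b a * cinner a b / complex_of_real A"
    using A by (simp add: cinner_cnj field_simps)
  also have "\<dots> = cinner b b - complex_of_real ((cmod (cinner a b))^2 / A)"
  proof -
    have cc: "cinner b a * cinner a b = complex_of_real ((cmod (cinner a b))^2)"
      using cnj_mult_self[of "cinner a b"] cinner_cnj[of a b] by simp
    show ?thesis by (simp add: cc)
  qed
  finally have "nsq r = nsq b - (cmod (cinner a b))^2 / A" by (simp add: nsq_def)
  moreover have "nsq r > 0" using r0 by (simp add: nsq_norm)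
  moreover have "nsq a = A" using A by (simp add: nsq_def)
  ultimately have "A * nsq r + (cmod (cinner a b))^2 = A * nsq b" "nsq r > 0" "nsq a = A"
    using A by (simp_all add: field_simps)
  moreover have "A * nsq r > 0" using A \<open>nsq r > 0\<close> by simp
  ultimately show ?thesis by simp
qed

context pqm begin

lemma CL:
  assumes d: "CARD('n) \<ge> 3" and z: "z \<in> M" and Ra: "R (cline a) z" and Rb: "R (cline b) z"
    and a: "a \<noteq> 0" and nb: "\<not> (\<exists>c. b = c *s a)"
  shows "R bot_sub z"
proof -
  obtain g where g: "g \<noteq> 0" "cinner a g = 0" "cinner b g = 0" using exists_orth3[OF d] by blast
  have np: "(cmod (cinner a b))^2 < nsq a * nsq b" by (rule nonpar[OF a nb])
  define k where "k = nat (ceiling (12 * mval a b))"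
  have "12 * mval a b \<le> real k" unfolding k_def by (rule real_nat_ceiling_ge)
  then have "mval a b \<le> real k / 12" by simp
  then show ?thesis using core[of k] z Ra Rb g np by blast
qed

end

lemma orth_single_scale: "orth {v} \<subseteq> orth {c *s v}"
  unfolding orth_def by (auto simp: cinner_scale_left)

definition pspan :: "complex ^ 'n \<Rightarrow> complex ^ 'n \<Rightarrow> (complex ^ 'n) set" where
  "pspan v w = {\<alpha> *s v + \<beta> *s w | \<alpha> \<beta>. True}"

lemma csubspace_pspan: "csubspace (pspan v w)"
  unfolding csubspace_def pspan_def
proof (intro conjI ballI allI)
  show "0 \<in> {\<alpha> *s v + \<beta> *s w |\<alpha> \<beta>. True}" by (rule CollectI, rule exI[of _ 0], rule exI[of _ 0]) simp
next
  fix x y assume "x \<in> {\<alpha> *s v + \<beta> *s w |\<alpha> \<beta>. True}" "y \<in> {\<alpha> *s v + \<beta> *s w |\<alpha> \<beta>. True}"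
  then obtain a b c d where "x = a *s v + b *s w" "y = c *s v + d *s w" by blast
  then have "x + y = (a + c) *s v + (b + d) *s w" by (simp add: vector_sadd_rdistrib algebra_simps)
  then show "x + y \<in> {\<alpha> *s v + \<beta> *s w |\<alpha> \<beta>. True}" by blast
next
  fix c x assume "x \<in> {\<alpha> *s v + \<beta> *s w |\<alpha> \<beta>. True}"
  then obtain a b where "x = a *s v + b *s w" by blast
  then have "c *s x = (c * a) *s v + (c * b) *s w" by (simp add: vector_add_ldistrib)
  then show "c *s x \<in> {\<alpha> *s v + \<beta> *s w |\<alpha> \<beta>. True}" by blast
qed

lemma pspan_mem: "\<alpha> *s v + \<beta> *s w \<in> pspan v w"
  unfolding pspan_def by blast

lemma sasaki_pspan_sub:
  assumes v: "v \<noteq> 0"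
  shows "sasaki (orth {v}) (pspan v w) \<subseteq> cline (cinner v v *s w - cinner v w *s v)"
proof
  fix y assume y: "y \<in> sasaki (orth {v}) (pspan v w)"
  then obtain t s where yts: "y = t + s" and t: "t \<in> orth (pspan v w)" and s: "s \<in> orth {v}"
    and yP: "y \<in> pspan v w"
    unfolding sasaki_def ssum_def by auto
  have vP: "v \<in> pspan v w" using pspan_mem[of 1 v 0 w] by simp
  have "cinner v t = 0" using t vP by (simp add: orth_def)
  moreover have "cinner v s = 0" using s by (simp add: orth_def)
  ultimately have vy: "cinner v y = 0" using yts by (simp add: cinner_simps)
  obtain \<alpha> \<beta> where yab: "y = \<alpha> *s v + \<beta> *s w" using yP unfolding pspan_def by blast
  have vv: "cinner v v \<noteq> 0" using v by (simp add: cinner_self_eq_0)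
  have "\<alpha> * cinner v v + \<beta> * cinner v w = 0" using vy yab by (simp add: cinner_simps mult.commute)
  then have "\<alpha> * cinner v v = - (\<beta> * cinner v w)" by (simp add: eq_neg_iff_add_eq_0)
  then have al: "\<alpha> = - (\<beta> * cinner v w) / cinner v v" using vv by (simp add: field_simps)
  have "y = (\<beta> / cinner v v) *s (cinner v v *s w - cinner v w *s v)"
    unfolding yab al vec_eq_iff using vv by (simp add: field_simps)
  then show "y \<in> cline (cinner v v *s w - cinner v w *s v)" by (metis cline_def rangeI)
qed

lemma gram_pos:
  assumes v: "v \<noteq> 0" and nb: "\<not> (\<exists>c. w = c *s v)"
  shows "cinner v v * cinner w w - cinner v w * cinner w v \<noteq> 0"
proof -
  have np: "(cmod (cinner v w))^2 < nsq v * nsq w" by (rule nonpar[OF v nb])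
  have "cinner v w * cinner w v = complex_of_real ((cmod (cinner v w))^2)"
    using cnj_mult_self[of "cinner v w"] cinner_cnj[of v w] by (simp add: mult.commute)
  then have "cinner v v * cinner w w - cinner v w * cinner w v
      = complex_of_real (nsq v * nsq w - (cmod (cinner v w))^2)"
    by (simp add: cinner_self_nsq)
  moreover have "nsq v * nsq w - (cmod (cinner v w))^2 \<noteq> 0" using np by simp
  ultimately show ?thesis by (metis of_real_eq_0_iff)
qed

context pqm begin

lemma W_add:
  assumes d: "CARD('n) \<ge> 3" and m: "m \<in> M" and Rv: "R (orth {v}) m" and Rw: "R (orth {w}) m"
  shows "R (orth {v + w}) m"
proof (cases "v = 0")
  case True then show ?thesis using Rw by simp
next
  case v0: False
  show ?thesis
  proof (cases "\<exists>c. w = c *s v")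
    case True
    then obtain c where "w = c *s v" by blast
    then have "v + w = (1 + c) *s v" by (simp add: vector_sadd_rdistrib)
    then have "orth {v} \<subseteq> orth {v + w}" using orth_single_scale by metis
    then show ?thesis using Rup[OF csubspace_orth csubspace_orth _ m Rv] by blast
  next
    case nb: False
    let ?P = "pspan v w"
    have P: "csubspace ?P" by (rule csubspace_pspan)
    have z': "proj ?P m \<in> M" by (rule projM[OF P m])
    define a0 where "a0 = cinner v v *s w - cinner v w *s v"
    define b0 where "b0 = cinner w w *s v - cinner w v *s w"
    have w0: "w \<noteq> 0" using nb by (metis vector_smult_lzero)
    have nb': "\<not> (\<exists>c. v = c *s w)"
    proof
      assume "\<exists>c. v = c *s w"
      then obtain c where c: "v = c *s w" by blast
      have "c \<noteq> 0" using c v0 by auto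
      then have "w = (1/c) *s v" using c by simp
      then show False using nb by blast
    qed
    have G1: "cinner v v * cinner w w - cinner v w * cinner w v \<noteq> 0" by (rule gram_pos[OF v0 nb])
    have Ra: "R (cline a0) (proj ?P m)"
      using Rup[OF csubspace_sasaki[OF csubspace_orth P] csubspace_cline sasaki_pspan_sub[OF v0] z']
        Rsas[OF csubspace_orth P m Rv] unfolding a0_def by blast
    have "sasaki (orth {w}) (pspan w v) \<subseteq> cline b0"
      using sasaki_pspan_sub[OF w0] unfolding b0_def .
    moreover have "pspan w v = ?P" unfolding pspan_def by (auto simp: add.commute) (metis add.commute)+
    ultimately have sb: "sasaki (orth {w}) ?P \<subseteq> cline b0" by simp
    have Rb: "R (cline b0) (proj ?P m)"
      using Rup[OF csubspace_sasaki[OF csubspace_orth P] csubspace_cline sb z']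
        Rsas[OF csubspace_orth P m Rw] by blast
    have wa: "cinner w a0 = cinner v v * cinner w w - cinner v w * cinner w v"
      unfolding a0_def by (simp add: cinner_simps algebra_simps)
    have a00: "a0 \<noteq> 0" using wa G1 by auto
    have va: "cinner v a0 = 0" unfolding a0_def by (simp add: cinner_simps algebra_simps)
    have vb: "cinner v b0 = cinner v v * cinner w w - cinner v w * cinner w v"
      unfolding b0_def by (simp add: cinner_simps algebra_simps)
    have nbb: "\<not> (\<exists>c. b0 = c *s a0)"
    proof
      assume "\<exists>c. b0 = c *s a0"
      then obtain c where "b0 = c *s a0" by blast
      then have "cinner v b0 = 0" using va by (simp add: cinner_scale_right)
      then show False using vb G1 by simp
    qed
    have "R bot_sub (proj ?P m)" by (rule CL[OF d z' Ra Rb a00 nbb])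
    then have "R (orth ?P) m" by (rule Rpbot[OF P m])
    moreover have "orth ?P \<subseteq> orth {v + w}"
      using pspan_mem[of 1 v 1 w] by (intro orth_antimono) simp
    ultimately show ?thesis using Rup[OF csubspace_orth csubspace_orth _ m] by blast
  qed
qed

end

lemma csub_diff_scale: "csubspace p \<Longrightarrow> x \<in> p \<Longrightarrow> v \<in> p \<Longrightarrow> x - c *s v \<in> p"
proof -
  assume p: "csubspace p" and x: "x \<in> p" and v: "v \<in> p"
  have "(-c) *s v \<in> p" using p v unfolding csubspace_def by blast
  then have "x + (-c) *s v \<in> p" using p x unfolding csubspace_def by blast
  moreover have "x + (-c) *s v = x - c *s v" by (simp add: vec_eq_iff)
  ultimately show ?thesis by simp
qed

lemma proj_decomp:
  assumes v: "v \<noteq> 0"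
  shows "cinner v (x - (cinner v x / cinner v v) *s v) = 0"
proof -
  have "cinner v v \<noteq> 0" using v by (simp add: cinner_self_eq_0)
  then show ?thesis by (simp add: cinner_simps)
qed

lemma compat_hyper:
  assumes p: "csubspace p" and vp: "v \<in> p" and v: "v \<noteq> 0"
  shows "compatible p (orth {v})"
  unfolding compatible_def
proof (rule set_eqI, rule iffI)
  fix x assume x: "x \<in> p"
  define lam where "lam = cinner v x / cinner v v"
  have 1: "x - lam *s v \<in> p \<inter> orth {v}"
    using csub_diff_scale[OF p x vp] proj_decomp[OF v, of x] by (simp add: orth_def lam_def)
  have "v \<in> orth (orth {v})" using orth_orth_sup by blast
  then have "lam *s v \<in> orth (orth {v})" using csubspace_orth[of "orth {v}"] unfolding csubspace_def by blast
  moreover have "lam *s v \<in> p" using p vp unfolding csubspace_def by blast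
  ultimately have 2: "lam *s v \<in> p \<inter> orth (orth {v})" by simp
  have "x = (x - lam *s v) + lam *s v" by simp
  then show "x \<in> ssum (p \<inter> orth {v}) (p \<inter> orth (orth {v}))" using 1 2 unfolding ssum_def by blast
next
  fix x assume "x \<in> ssum (p \<inter> orth {v}) (p \<inter> orth (orth {v}))"
  then show "x \<in> p" using p unfolding ssum_def csubspace_def by auto
qed

context pqm begin

lemma orth_W_aux:
  assumes m: "m \<in> M"
  shows "\<forall>S. csubspace S \<longrightarrow> (\<forall>v\<in>S. R (orth {v}) m) \<longrightarrow> dim S = n \<longrightarrow> R (orth S) m"
proof (induction n rule: less_induct)
  case (less n)
  show ?case
  proof (intro allI impI)
    fix S :: "(complex ^ 'n) set"
    assume S: "csubspace S" and W: "\<forall>v\<in>S. R (orth {v}) m" and dS: "dim S = n"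
    show "R (orth S) m"
    proof (cases "S \<subseteq> {0}")
      case True
      then have "orth S = UNIV" unfolding orth_def by auto
      then show ?thesis using Rtop[OF m] by simp
    next
      case False
      then obtain v where vS: "v \<in> S" and v0: "v \<noteq> 0" by auto
      define S' where "S' = S \<inter> orth {v}"
      have S': "csubspace S'" unfolding S'_def by (rule csubspace_inter[OF S csubspace_orth])
      have "v \<notin> S'" using v0 by (simp add: S'_def orth_def cinner_self_eq_0)
      then have "S' \<subset> S" using vS by (auto simp: S'_def)
      moreover have "span S' = S'" "span S = S"
        using csubspace_subspace[OF S'] csubspace_subspace[OF S] by (simp_all add: span_eq_iff)
      ultimately have "dim S' < dim S" using dim_psubset by metis
      then have R1: "R (orth S') m" using less[of "dim S'"] dS S' W by (auto simp: S'_def)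
      have R2: "R (orth {v}) m" using W vS by blast
      have vo: "v \<in> orth S'" unfolding orth_def S'_def
        by (auto simp: orth_def) (metis cinner_cnj complex_cnj_zero)
      have "compatible (orth S') (orth {v})" by (rule compat_hyper[OF csubspace_orth vo v0])
      then have R3: "R (orth S' \<inter> orth {v}) m"
        using Rmeet[OF csubspace_orth csubspace_orth _ m R1 R2] by blast
      have sub: "orth S' \<inter> orth {v} \<subseteq> orth S"
      proof
        fix y assume y: "y \<in> orth S' \<inter> orth {v}"
        show "y \<in> orth S" unfolding orth_def
        proof (clarify)
          fix x assume x: "x \<in> S"
          define lam where "lam = cinner v x / cinner v v"
          have x': "x - lam *s v \<in> S'"
            using csub_diff_scale[OF S x vS] proj_decomp[OF v0, of x]
            by (simp add: S'_def orth_def lam_def)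
          have "cinner (x - lam *s v) y = 0" using y x' by (simp add: orth_def)
          moreover have "cinner v y = 0" using y by (simp add: orth_def)
          moreover have "x = (x - lam *s v) + lam *s v" by simp
          ultimately show "cinner x y = 0"
            by (metis cinner_add_left cinner_scale_left mult_zero_right add_0)
        qed
      qed
      show ?thesis
        using Rup[OF csubspace_inter[OF csubspace_orth csubspace_orth] csubspace_orth sub m R3] .
    qed
  qed
qed

lemma W_closed:
  assumes d: "CARD('n) \<ge> 3" and m: "m \<in> M"
  shows "csubspace {v. R (orth {v}) m}"
  unfolding csubspace_def
proof (intro conjI ballI allI)
  have "orth {0::complex^'n} = UNIV" by (simp add: orth_def)
  then show "0 \<in> {v. R (orth {v}) m}" using Rtop[OF m] by simp
next
  fix x y assume "x \<in> {v. R (orth {v}) m}" "y \<in> {v. R (orth {v}) m}"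
  then show "x + y \<in> {v. R (orth {v}) m}" using W_add[OF d m] by blast
next
  fix c x assume "x \<in> {v. R (orth {v}) m}"
  then show "c *s x \<in> {v. R (orth {v}) m}"
    using Rup[OF csubspace_orth csubspace_orth orth_single_scale m] by blast
qed

lemma principal:
  assumes d: "CARD('n) \<ge> 3" and m: "m \<in> M" and p: "csubspace p"
  shows "R p m \<longleftrightarrow> orth {v. R (orth {v}) m} \<subseteq> p"
proof
  let ?W = "{v. R (orth {v}) m}"
  assume Rp: "R p m"
  have "orth p \<subseteq> ?W"
  proof
    fix v assume v: "v \<in> orth p"
    have "p \<subseteq> orth {v}"
    proof
      fix w assume "w \<in> p"
      then have "cinner w v = 0" using v by (simp add: orth_def)
      then have "cinner v w = 0" by (metis cinner_cnj complex_cnj_zero)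
      then show "w \<in> orth {v}" by (simp add: orth_def)
    qed
    then show "v \<in> ?W" using Rup[OF p csubspace_orth _ m Rp] by blast
  qed
  then have "orth ?W \<subseteq> orth (orth p)" by (rule orth_antimono)
  then show "orth ?W \<subseteq> p" using orth_orth[OF p] by simp
next
  let ?W = "{v. R (orth {v}) m}"
  assume sub: "orth ?W \<subseteq> p"
  have "R (orth ?W) m" using orth_W_aux[OF m] W_closed[OF d m] by blast
  then show "R p m" using Rup[OF csubspace_orth p sub m] by blast
qed

end

theorem mainTheorem10:
  fixes M :: "'m set"
    and u :: "complex ^ 'n ^ 'n \<Rightarrow> 'm \<Rightarrow> 'm"
    and proj :: "(complex ^ 'n) set \<Rightarrow> 'm \<Rightarrow> 'm"
    and R :: "(complex ^ 'n) set \<Rightarrow> 'm \<Rightarrow> bool"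
  assumes "CARD('n) \<ge> 3"
    and "PQM_model M u proj R"
  shows "\<exists>\<kappa> :: 'm \<Rightarrow> (complex ^ 'n) set.
           \<forall>m\<in>M. csubspace (\<kappa> m) \<and>
             (\<forall>p. csubspace p \<longrightarrow> (R p m \<longleftrightarrow> \<kappa> m \<subseteq> p))"
proof -
  interpret pqm M u proj R by (rule pqm.intro[OF assms(2)])
  show ?thesis
  proof (rule exI[of _ "\<lambda>m. orth {v. R (orth {v}) m}"], intro ballI conjI allI impI)
    fix m and p :: "(complex ^ 'n) set" assume "m \<in> M" "csubspace p"
    then show "R p m = (orth {v. R (orth {v}) m} \<subseteq> p)" by (rule principal[OF assms(1)])
  qed (rule csubspace_orth)
qed


end
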